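(* Let $d>0$, let $J$ satisfy (J) and (J2), and let $f$ satisfy (f3); let $c_*>0$ be the minimal traveling wave speed described in the context. Fix $\sigma\in(0,1)$ and $c\in(0,c_* )$, and let $M$, $\tilde f$, $a$, $A$ and $\phi_*^\sigma$ be as in the context. Then the pointwise limit $\phi_\sigma(x):=\lim_{n\to\infty}A^n[\phi_*^\sigma](x)$ exists for every $x\in\mathbb{R}$, and $\phi=\phi_\sigma$ is a solution of $$d\int_{-\infty}^{+\infty}J(x-y)\phi(y)\,dy-d\phi(x)+c\phi'(x)+f(\phi(x))=0\ \ (-\infty<x<0),\qquad \phi(-\infty)=1,\quad \phi(x)=\sigma\ \ (0\le x<+\infty),$$ with $\phi_\sigma$ continuously differentiable on $(-\infty,0)$ and $0\le\phi_\sigma\le1$.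
   Context: Condition (J): $J\in C(\mathbb{R})\cap L^\infty(\mathbb{R})$, $J\ge 0$, $J(0)>0$, $\int_{\mathbb{R}}J=1$, $J$ even. Condition (J2): there exists $\lambda>0$ with $\int_{\mathbb{R}}J(x)e^{\lambda x}dx<\infty$. Condition (f3): $f\in C^1([0,\infty))$, $f(0)=f(1)=0$, $f>0$ in $(0,1)$, $f'(0)>0>f'(1)$, $f(u)/u$ nonincreasing in $u>0$. Known fact (minimal speed): under (J), (J2), (f3) there is $c_*>0$ such that the problem $d\int_{\mathbb{R}}J(x-y)\phi(y)dy-d\phi(x)+c\phi'(x)+f(\phi(x))=0$ on $\mathbb{R}$, $\phi(-\infty)=1$, $\phi(+\infty)=0$, has a nonincreasing solution $\phi\in L^\infty(\mathbb{R})$ if and only if $c\ge c_*$; such solutions are $C^1$. Construction: choose $M>0$ such that $\tilde f(u):=(cM-d)u+f(u)$ is increasing on $[0,1]$; let $a(x)=\int_{-\infty}^xJ(y)dy$. On $\Omega=\{\phi\in C(\mathbb{R}):0\le\phi\le1\}$ define $A[\phi](x)=\sigma$ for $x\ge0$ and, for $x<0$, $$A[\phi](x)=e^{Mx}\sigma+\frac{e^{Mx}}{c}\int_x^0e^{-M\xi}\Big[d\int_{-\infty}^0J(\xi-y)\phi(y)dy+d\sigma a(\xi)+\tilde f(\phi(\xi))\Big]d\xi.$$ Let $\phi_*$ be a nonincreasing traveling wave solution with speed $c_*$ (as in the known fact), translated so that $\phi_*(0)=\sigma$, and set $\phi_*^\sigma(x)=\max\{\phi_*(x),\sigma\}$ (so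 $\phi_*^\sigma=\phi_*$ on $(-\infty,0)$ and $=\sigma$ on $[0,\infty)$). *)

theory Defs
  imports "HOL-Analysis.Analysis"
begin

definition cond_J :: "(real \<Rightarrow> real) \<Rightarrow> bool" where
  "cond_J J \<longleftrightarrow> continuous_on UNIV J \<and> bounded (range J) \<and> (\<forall>x. J x \<ge> 0) \<and> J 0 > 0
     \<and> (J has_integral 1) UNIV \<and> (\<forall>x. J (-x) = J x)"

definition cond_J2 :: "(real \<Rightarrow> real) \<Rightarrow> bool" where
  "cond_J2 J \<longleftrightarrow> (\<exists>l>0. (\<lambda>x. J x * exp (l * x)) integrable_on UNIV)"

definition cond_f3 :: "(real \<Rightarrow> real) \<Rightarrow> bool" where
  "cond_f3 f \<longleftrightarrow> (\<exists>f'. continuous_on {0..} f'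
        \<and> (\<forall>u\<ge>0. (f has_real_derivative f' u) (at u within {0..}))
        \<and> f' 0 > 0 \<and> f' 1 < 0)
     \<and> f 0 = 0 \<and> f 1 = 0 \<and> (\<forall>u. 0 < u \<and> u < 1 \<longrightarrow> f u > 0)
     \<and> (\<forall>u v. 0 < u \<and> u \<le> v \<longrightarrow> f v / v \<le> f u / u)"

definition tw_solution ::
  "real \<Rightarrow> (real \<Rightarrow> real) \<Rightarrow> (real \<Rightarrow> real) \<Rightarrow> real \<Rightarrow> (real \<Rightarrow> real) \<Rightarrow> bool" where
  "tw_solution d J f c \<phi> \<longleftrightarrow> bounded (range \<phi>) \<and> antimono \<phi>
     \<and> (\<forall>x. \<phi> differentiable (at x)
          \<and> d * integral UNIV (\<lambda>y. J (x - y) * \<phi> y) - d * \<phi> x + c * deriv \<phi> x + f (\<phi> x) = 0)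
     \<and> (\<phi> \<longlongrightarrow> 1) at_bot \<and> (\<phi> \<longlongrightarrow> 0) at_top"

definition ftilde :: "real \<Rightarrow> real \<Rightarrow> real \<Rightarrow> (real \<Rightarrow> real) \<Rightarrow> real \<Rightarrow> real" where
  "ftilde c M d f u = (c * M - d) * u + f u"

definition aJ :: "(real \<Rightarrow> real) \<Rightarrow> real \<Rightarrow> real" where
  "aJ J x = integral {..x} J"

definition opA ::
  "real \<Rightarrow> (real \<Rightarrow> real) \<Rightarrow> (real \<Rightarrow> real) \<Rightarrow> real \<Rightarrow> real \<Rightarrow> real
     \<Rightarrow> (real \<Rightarrow> real) \<Rightarrow> real \<Rightarrow> real" where
  "opA d J f c M \<sigma> \<phi> x =
     (if x \<ge> 0 then \<sigma>
      else exp (M * x) * \<sigma> + exp (M * x) / c *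
        integral {x..0} (\<lambda>\<xi>. exp (- M * \<xi>) *
          (d * integral {..0} (\<lambda>y. J (\<xi> - y) * \<phi> y) + d * \<sigma> * aJ J \<xi>
           + ftilde c M d f (\<phi> \<xi>))))"

end

theory Submission imports Defs begin

locale conv =
  fixes J :: "real \<Rightarrow> real"
  assumes Jc: "continuous_on UNIV J" and Jnn: "\<And>x. J x \<ge> 0" and J1: "(J has_integral 1) UNIV"
begin

lemma J_borel[measurable]: "J \<in> borel_measurable borel"
  using Jc by (rule borel_measurable_continuous_onI)

lemma J_lborel: "integrable lborel J" "integral\<^sup>L lborel J = 1"
proof -
  have nn: "integral\<^sup>N lborel J = 1"
    using nn_integral_has_integral_lborel[OF J_borel Jnn J1] by simp
  show i: "integrable lborel J"
    by (rule integrableI_nonneg) (auto simp: nn Jnn)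
  show "integral\<^sup>L lborel J = 1"
    using has_integral_integral_lborel[OF i] J1 has_integral_unique by blast
qed

lemma Jshift: "integrable lborel (\<lambda>y. J (\<xi> - y))" "(\<integral>y. J (\<xi> - y) \<partial>lborel) = 1"
proof -
  have "integrable lborel (\<lambda>y. J (\<xi> + (-1) * y))"
    by (rule lborel_integrable_real_affine[OF J_lborel(1)]) simp
  then show "integrable lborel (\<lambda>y. J (\<xi> - y))" by simp
  have "integral\<^sup>L lborel J = \<bar>-1\<bar> *\<^sub>R (\<integral>y. J (\<xi> + (-1) * y) \<partial>lborel)"
    by (rule lborel_integral_real_affine) simp
  then show "(\<integral>y. J (\<xi> - y) \<partial>lborel) = 1" using J_lborel(2) by simp
qed

definition KL :: "(real \<Rightarrow> real) \<Rightarrow> real \<Rightarrow> real" where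
  "KL \<phi> \<xi> = (\<integral>y. J (\<xi> - y) * \<phi> y \<partial>lborel)"

lemma KL_int:
  assumes [measurable]: "\<phi> \<in> borel_measurable borel" and B: "\<And>y. \<bar>\<phi> y\<bar> \<le> B"
  shows "integrable lborel (\<lambda>y. J (\<xi> - y) * \<phi> y)"
proof -
  have i: "integrable lborel (\<lambda>y. B * J (\<xi> - y))"
    using Jshift(1) by simp
  have "B \<ge> 0" using B[of 0] by simp
  show ?thesis
  proof (rule Bochner_Integration.integrable_bound[OF i])
    show "AE y in lborel. norm (J (\<xi> - y) * \<phi> y) \<le> norm (B * J (\<xi> - y))"
    proof (rule AE_I2)
      fix y
      have "\<bar>J (\<xi> - y) * \<phi> y\<bar> = J (\<xi> - y) * \<bar>\<phi> y\<bar>" by (simp add: abs_mult Jnn)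
      also have "\<dots> \<le> J (\<xi> - y) * B" by (rule mult_left_mono[OF B Jnn])
      finally show "norm (J (\<xi> - y) * \<phi> y) \<le> norm (B * J (\<xi> - y))"
        using \<open>B \<ge> 0\<close> Jnn[of "\<xi> - y"] by (simp add: abs_mult mult.commute)
    qed
  qed simp
qed

lemma KL_mono:
  assumes [measurable]: "\<phi> \<in> borel_measurable borel" "\<psi> \<in> borel_measurable borel"
    and "\<And>y. \<bar>\<phi> y\<bar> \<le> B" "\<And>y. \<bar>\<psi> y\<bar> \<le> B" and le: "\<And>y. \<phi> y \<le> \<psi> y"
  shows "KL \<phi> \<xi> \<le> KL \<psi> \<xi>"
  unfolding KL_def
  using assms Jnn by (intro integral_mono[OF KL_int KL_int]) (auto intro: mult_left_mono)

lemma KL_const: "KL (\<lambda>y. k) \<xi> = k"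
  unfolding KL_def using Jshift[of \<xi>] by simp

lemma KL_bounds:
  assumes [measurable]: "\<phi> \<in> borel_measurable borel" and b: "\<And>y. 0 \<le> \<phi> y \<and> \<phi> y \<le> 1"
  shows "0 \<le> KL \<phi> \<xi>" "KL \<phi> \<xi> \<le> 1"
proof -
  have B: "\<And>y. \<bar>\<phi> y\<bar> \<le> 1" using b by (simp add: abs_le_iff)
  show "0 \<le> KL \<phi> \<xi>"
    using KL_mono[of "\<lambda>y. 0" \<phi> 1 \<xi>] B b by (simp add: KL_const)
  show "KL \<phi> \<xi> \<le> 1"
    using KL_mono[of \<phi> "\<lambda>y. 1" 1 \<xi>] B b by (simp add: KL_const)
qed

lemma KL_HK:
  assumes [measurable]: "\<phi> \<in> borel_measurable borel" and B: "\<And>y. \<bar>\<phi> y\<bar> \<le> B"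
  shows "integral UNIV (\<lambda>y. J (\<xi> - y) * \<phi> y) = KL \<phi> \<xi>"
  unfolding KL_def by (rule integral_lborel[OF KL_int[OF assms]])

lemma KL_lim:
  assumes [measurable]: "\<And>n. \<phi>s n \<in> borel_measurable borel" "\<phi> \<in> borel_measurable borel"
    and B: "\<And>n y. \<bar>\<phi>s n y\<bar> \<le> B" and lim: "\<And>y. (\<lambda>n. \<phi>s n y) \<longlonglongrightarrow> \<phi> y"
  shows "(\<lambda>n. KL (\<phi>s n) \<xi>) \<longlonglongrightarrow> KL \<phi> \<xi>"
  unfolding KL_def
proof (rule integral_dominated_convergence[where w="\<lambda>y. B * J (\<xi> - y)"])
  show "integrable lborel (\<lambda>y. B * J (\<xi> - y))" using Jshift(1) by simp
  show "AE y in lborel. (\<lambda>n. J (\<xi> - y) * \<phi>s n y) \<longlonglongrightarrow> J (\<xi> - y) * \<phi> y"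
    by (intro AE_I2 tendsto_mult tendsto_const lim)
  show "AE y in lborel. norm (J (\<xi> - y) * \<phi>s n y) \<le> B * J (\<xi> - y)" for n
  proof (rule AE_I2)
    fix y
    have "\<bar>J (\<xi> - y) * \<phi>s n y\<bar> = J (\<xi> - y) * \<bar>\<phi>s n y\<bar>" by (simp add: abs_mult Jnn)
    also have "\<dots> \<le> J (\<xi> - y) * B" by (rule mult_left_mono[OF B Jnn])
    finally show "norm (J (\<xi> - y) * \<phi>s n y) \<le> B * J (\<xi> - y)" by (simp add: mult.commute)
  qed
qed auto

lemma scheffe:
  assumes xs: "xs \<longlonglongrightarrow> \<xi>"
  shows "(\<lambda>n. \<integral>y. \<bar>J (xs n - y) - J (\<xi> - y)\<bar> \<partial>lborel) \<longlonglongrightarrow> 0"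
proof -
  have Jcont: "isCont J x" for x using Jc by (simp add: continuous_on_eq_continuous_at)
  have im: "integrable lborel (\<lambda>y. min (J (xs n - y)) (J (\<xi> - y)))" for n
    by (intro Bochner_Integration.integrable_bound[OF Jshift(1)[of \<xi>]] AE_I2) (auto simp: Jnn)
  have mlim: "(\<lambda>n. \<integral>y. min (J (xs n - y)) (J (\<xi> - y)) \<partial>lborel) \<longlonglongrightarrow> (\<integral>y. J (\<xi> - y) \<partial>lborel)"
  proof (rule integral_dominated_convergence[where w="\<lambda>y. J (\<xi> - y)"])
    show "integrable lborel (\<lambda>y. J (\<xi> - y))" by (rule Jshift(1))
    show "AE y in lborel. (\<lambda>n. min (J (xs n - y)) (J (\<xi> - y))) \<longlonglongrightarrow> J (\<xi> - y)"
    proof (rule AE_I2)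
      fix y
      have "(\<lambda>n. J (xs n - y)) \<longlonglongrightarrow> J (\<xi> - y)"
        by (rule isCont_tendsto_compose[OF Jcont]) (intro tendsto_intros xs)
      then have "(\<lambda>n. min (J (xs n - y)) (J (\<xi> - y))) \<longlonglongrightarrow> min (J (\<xi> - y)) (J (\<xi> - y))"
        by (intro tendsto_min tendsto_const)
      then show "(\<lambda>n. min (J (xs n - y)) (J (\<xi> - y))) \<longlonglongrightarrow> J (\<xi> - y)" by simp
    qed
    show "AE y in lborel. norm (min (J (xs n - y)) (J (\<xi> - y))) \<le> J (\<xi> - y)" for n
      by (rule AE_I2) (auto simp: Jnn)
  qed auto
  have eq: "(\<integral>y. \<bar>J (xs n - y) - J (\<xi> - y)\<bar> \<partial>lborel) = 2 - 2 * (\<integral>y. min (J (xs n - y)) (J (\<xi> - y)) \<partial>lborel)" for n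
  proof -
    have "(\<integral>y. \<bar>J (xs n - y) - J (\<xi> - y)\<bar> \<partial>lborel)
       = (\<integral>y. J (xs n - y) + J (\<xi> - y) - 2 * min (J (xs n - y)) (J (\<xi> - y)) \<partial>lborel)"
      by (rule Bochner_Integration.integral_cong) auto
    also have "\<dots> = (\<integral>y. J (xs n - y) \<partial>lborel) + (\<integral>y. J (\<xi> - y) \<partial>lborel) - 2 * (\<integral>y. min (J (xs n - y)) (J (\<xi> - y)) \<partial>lborel)"
      using Jshift(1) im by simp
    finally show ?thesis using Jshift(2) by simp
  qed
  have "(\<lambda>n. 2 - 2 * (\<integral>y. min (J (xs n - y)) (J (\<xi> - y)) \<partial>lborel)) \<longlonglongrightarrow> 2 - 2 * 1"
    using mlim Jshift(2)[of \<xi>] by (intro tendsto_intros) auto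
  then show ?thesis unfolding eq by simp
qed

lemma KL_cont:
  assumes [measurable]: "\<phi> \<in> borel_measurable borel" and B: "\<And>y. \<bar>\<phi> y\<bar> \<le> B"
  shows "continuous_on UNIV (KL \<phi>)"
proof (rule continuous_at_imp_continuous_on, intro ballI)
  fix \<xi> :: real
  have B0: "B \<ge> 0" using B[of 0] by simp
  show "isCont (KL \<phi>) \<xi>"
    unfolding continuous_at_sequentially comp_def
  proof (intro allI impI)
    fix xs assume xs: "xs \<longlonglongrightarrow> \<xi>"
    have "(\<lambda>n. KL \<phi> (xs n) - KL \<phi> \<xi>) \<longlonglongrightarrow> 0"
    proof (rule Lim_null_comparison)
      show "(\<lambda>n. B * (\<integral>y. \<bar>J (xs n - y) - J (\<xi> - y)\<bar> \<partial>lborel)) \<longlonglongrightarrow> 0"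
        using tendsto_mult_right_zero[OF scheffe[OF xs]] by simp
      show "\<forall>\<^sub>F n in sequentially. norm (KL \<phi> (xs n) - KL \<phi> \<xi>) \<le> B * (\<integral>y. \<bar>J (xs n - y) - J (\<xi> - y)\<bar> \<partial>lborel)"
      proof (rule always_eventually, rule allI)
        fix n
        have i1: "integrable lborel (\<lambda>y. J (xs n - y) * \<phi> y)" and i2: "integrable lborel (\<lambda>y. J (\<xi> - y) * \<phi> y)"
          using KL_int[OF assms] by auto
        have i3: "integrable lborel (\<lambda>y. B * \<bar>J (xs n - y) - J (\<xi> - y)\<bar>)"
          using Jshift(1)[of "xs n"] Jshift(1)[of \<xi>] by (intro integrable_mult_right integrable_abs Bochner_Integration.integrable_diff)
        have "KL \<phi> (xs n) - KL \<phi> \<xi> = (\<integral>y. (J (xs n - y) - J (\<xi> - y)) * \<phi> y \<partial>lborel)"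
          unfolding KL_def using i1 i2 by (simp add: left_diff_distrib)
        also have "norm \<dots> \<le> (\<integral>y. norm ((J (xs n - y) - J (\<xi> - y)) * \<phi> y) \<partial>lborel)"
          by (rule integral_norm_bound)
        also have "\<dots> \<le> (\<integral>y. B * \<bar>J (xs n - y) - J (\<xi> - y)\<bar> \<partial>lborel)"
        proof (rule integral_mono[OF _ i3])
          show "integrable lborel (\<lambda>y. norm ((J (xs n - y) - J (\<xi> - y)) * \<phi> y))"
            using i1 i2 by (intro integrable_norm) (simp add: left_diff_distrib)
          show "norm ((J (xs n - y) - J (\<xi> - y)) * \<phi> y) \<le> B * \<bar>J (xs n - y) - J (\<xi> - y)\<bar>" for y
            using mult_left_mono[OF B[of y] abs_ge_zero[of "J (xs n - y) - J (\<xi> - y)"]]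
            by (simp add: abs_mult mult.commute)
        qed
        also have "\<dots> = B * (\<integral>y. \<bar>J (xs n - y) - J (\<xi> - y)\<bar> \<partial>lborel)" by simp
        finally show "norm (KL \<phi> (xs n) - KL \<phi> \<xi>) \<le> B * (\<integral>y. \<bar>J (xs n - y) - J (\<xi> - y)\<bar> \<partial>lborel)" .
      qed
    qed
    then show "(\<lambda>n. KL \<phi> (xs n)) \<longlonglongrightarrow> KL \<phi> \<xi>" by (simp add: LIM_zero_iff)
  qed
qed

lemma aJ_KL: "s * aJ J \<xi> = (\<integral>y. J (\<xi> - y) * (s * indicator {0..} y) \<partial>lborel)"
proof -
  have iF: "integrable lborel (\<lambda>t. indicator {..\<xi>} t * J t)"
    using integrable_real_mult_indicator[of "{..\<xi>}" lborel J] J_lborel(1) by (simp add: mult.commute)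
  have "aJ J \<xi> = integral UNIV (\<lambda>t. if t \<in> {..\<xi>} then J t else 0)"
    unfolding aJ_def by (rule integral_restrict_UNIV[symmetric])
  also have "\<dots> = integral UNIV (\<lambda>t. indicator {..\<xi>} t * J t)"
    by (rule arg_cong[where f="integral UNIV"]) (auto simp: indicator_def)
  also have "\<dots> = (\<integral>t. indicator {..\<xi>} t * J t \<partial>lborel)"
    by (rule integral_lborel[OF iF])
  also have "\<dots> = \<bar>-1\<bar> *\<^sub>R (\<integral>y. indicator {..\<xi>} (\<xi> + (-1) * y) * J (\<xi> + (-1) * y) \<partial>lborel)"
    by (rule lborel_integral_real_affine) simp
  also have "\<dots> = (\<integral>y. J (\<xi> - y) * indicator {0..} y \<partial>lborel)"
    by (simp add: indicator_def mult.commute)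
  finally show ?thesis by (simp add: mult.left_commute)
qed

lemma KL_split:
  assumes [measurable]: "\<phi> \<in> borel_measurable borel" and B: "\<And>y. \<bar>\<phi> y\<bar> \<le> B"
    and s: "\<And>y. y \<ge> 0 \<Longrightarrow> \<phi> y = s"
  shows "integral {..0} (\<lambda>y. J (\<xi> - y) * \<phi> y) + s * aJ J \<xi> = KL \<phi> \<xi>"
proof -
  define \<phi>1 where "\<phi>1 y = (if y \<le> 0 then \<phi> y else 0)" for y
  have m1[measurable]: "\<phi>1 \<in> borel_measurable borel" unfolding \<phi>1_def by measurable
  have b1: "\<bar>\<phi>1 y\<bar> \<le> B" for y using B[of y] B[of 0] unfolding \<phi>1_def by auto
  have "integral {..0} (\<lambda>y. J (\<xi> - y) * \<phi> y) = integral UNIV (\<lambda>y. if y \<in> {..0} then J (\<xi> - y) * \<phi> y else 0)"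
    by (rule integral_restrict_UNIV[symmetric])
  also have "\<dots> = integral UNIV (\<lambda>y. J (\<xi> - y) * \<phi>1 y)"
    by (rule arg_cong[where f="integral UNIV"]) (auto simp: \<phi>1_def)
  also have "\<dots> = KL \<phi>1 \<xi>" by (rule KL_HK[OF m1 b1])
  finally have e1: "integral {..0} (\<lambda>y. J (\<xi> - y) * \<phi> y) = KL \<phi>1 \<xi>" .
  have s2: "s * aJ J \<xi> = (\<integral>y. J (\<xi> - y) * (s * indicator {0<..} y) \<partial>lborel)"
    unfolding aJ_KL
  proof (rule integral_cong_AE)
    show "AE y in lborel. J (\<xi> - y) * (s * indicator {0..} y) = J (\<xi> - y) * (s * indicator {0<..} y)"
      using AE_lborel_singleton[of 0] by eventually_elim (auto simp: indicator_def)
  qed auto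
  have bs: "\<bar>s\<bar> \<le> B" using B[of 0] s[of 0] by simp
  have i2: "integrable lborel (\<lambda>y. J (\<xi> - y) * (s * indicator {0<..} y))"
    by (rule KL_int[where B=B]) (use bs in \<open>auto simp: indicator_def\<close>)
  have i1: "integrable lborel (\<lambda>y. J (\<xi> - y) * \<phi>1 y)" by (rule KL_int[OF m1 b1])
  have "KL \<phi> \<xi> = (\<integral>y. J (\<xi> - y) * \<phi>1 y + J (\<xi> - y) * (s * indicator {0<..} y) \<partial>lborel)"
    unfolding KL_def
    by (rule Bochner_Integration.integral_cong) (auto simp: \<phi>1_def indicator_def s)
  also have "\<dots> = KL \<phi>1 \<xi> + s * aJ J \<xi>"
    unfolding s2 KL_def using i1 i2 by simp
  finally show ?thesis using e1 by simp
qed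

end

lemma borel_lebesgue_on: "(g::real \<Rightarrow> real) \<in> borel_measurable borel \<Longrightarrow> g \<in> borel_measurable (lebesgue_on S)"
  by (metis sets_lborel measurable_completion measurable_restrict_space1 measurable_cong_sets)

locale wave = conv J for J :: "real \<Rightarrow> real" +
  fixes f :: "real \<Rightarrow> real" and d c M \<sigma> :: real
  assumes d: "d > 0" and c: "c > 0" and M: "M > 0" and \<sigma>: "0 < \<sigma>" "\<sigma> < 1"
    and fc: "continuous_on {0..1} f" and f0: "f 0 = 0" and f1: "f 1 = 0"
    and ftmono: "mono_on {0..1} (ftilde c M d f)"
begin

abbreviation "ft \<equiv> ftilde c M d f"
abbreviation "A \<equiv> opA d J f c M \<sigma>"

definition ftc :: "real \<Rightarrow> real" where "ftc u = ft (max 0 (min 1 u))"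

lemma ft_cont: "continuous_on {0..1} ft"
  unfolding ftilde_def by (intro continuous_intros fc)

lemma ftc_cont: "continuous_on UNIV ftc"
proof -
  have "continuous_on UNIV (\<lambda>u. max 0 (min 1 u) :: real)" by (intro continuous_intros)
  moreover have "(\<lambda>u. max 0 (min 1 u) :: real) ` UNIV \<subseteq> {0..1}" by auto
  ultimately show ?thesis unfolding ftc_def
    using continuous_on_compose2[OF ft_cont] by blast
qed

lemma ftc_eq: "0 \<le> u \<Longrightarrow> u \<le> 1 \<Longrightarrow> ftc u = ft u"
  unfolding ftc_def by simp

lemma ft_bounds: "0 \<le> u \<Longrightarrow> u \<le> 1 \<Longrightarrow> 0 \<le> ft u \<and> ft u \<le> c * M - d"
proof -
  assume u: "0 \<le> u" "u \<le> 1"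
  have "ft 0 \<le> ft u" using ftmono u by (auto intro: mono_onD)
  moreover have "ft u \<le> ft 1" using ftmono u by (auto intro: mono_onD)
  ultimately show ?thesis by (simp add: ftilde_def f0 f1)
qed

definition Pc :: "(real \<Rightarrow> real) \<Rightarrow> bool" where
  "Pc \<phi> \<longleftrightarrow> \<phi> \<in> borel_measurable borel \<and> (\<forall>x. 0 \<le> \<phi> x \<and> \<phi> x \<le> 1) \<and> (\<forall>x\<ge>0. \<phi> x = \<sigma>)"

definition H :: "(real \<Rightarrow> real) \<Rightarrow> real \<Rightarrow> real" where
  "H \<phi> \<xi> = exp (- M * \<xi>) * (d * KL \<phi> \<xi> + ft (\<phi> \<xi>))"

lemma Pc_abs: "Pc \<phi> \<Longrightarrow> \<bar>\<phi> y\<bar> \<le> 1"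
  unfolding Pc_def by (simp add: abs_le_iff)

lemma A_eq:
  assumes "Pc \<phi>"
  shows "A \<phi> x = (if 0 \<le> x then \<sigma> else exp (M * x) * \<sigma> + exp (M * x) / c * integral {x..0} (H \<phi>))"
proof -
  have m: "\<phi> \<in> borel_measurable borel" and s: "\<And>y. y \<ge> 0 \<Longrightarrow> \<phi> y = \<sigma>"
    using assms unfolding Pc_def by auto
  have "(\<lambda>\<xi>. exp (- M * \<xi>) * (d * integral {..0} (\<lambda>y. J (\<xi> - y) * \<phi> y) + d * \<sigma> * aJ J \<xi> + ft (\<phi> \<xi>))) = H \<phi>"
  proof
    fix \<xi>
    have e: "integral {..0} (\<lambda>y. J (\<xi> - y) * \<phi> y) + \<sigma> * aJ J \<xi> = KL \<phi> \<xi>"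
      using KL_split[OF m Pc_abs[OF assms] s, of \<xi>] by simp
    have "d * integral {..0} (\<lambda>y. J (\<xi> - y) * \<phi> y) + d * \<sigma> * aJ J \<xi>
        = d * (integral {..0} (\<lambda>y. J (\<xi> - y) * \<phi> y) + \<sigma> * aJ J \<xi>)" by (simp add: algebra_simps)
    also have "\<dots> = d * KL \<phi> \<xi>" by (simp only: e)
    finally have "d * integral {..0} (\<lambda>y. J (\<xi> - y) * \<phi> y) + d * \<sigma> * aJ J \<xi> = d * KL \<phi> \<xi>" .
    then show "exp (- M * \<xi>) * (d * integral {..0} (\<lambda>y. J (\<xi> - y) * \<phi> y) + d * \<sigma> * aJ J \<xi> + ft (\<phi> \<xi>)) = H \<phi> \<xi>"
      unfolding H_def by simp
  qed
  then show ?thesis unfolding opA_def by simp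
qed

lemma H_meas:
  assumes "Pc \<phi>" shows "H \<phi> \<in> borel_measurable borel"
proof -
  have m[measurable]: "\<phi> \<in> borel_measurable borel" using assms unfolding Pc_def by auto
  have "H \<phi> = (\<lambda>\<xi>. exp (- M * \<xi>) * (d * KL \<phi> \<xi> + ftc (\<phi> \<xi>)))"
    using assms unfolding H_def Pc_def by (auto simp: ftc_eq)
  moreover have [measurable]: "KL \<phi> \<in> borel_measurable borel"
    by (rule borel_measurable_continuous_onI[OF KL_cont[OF m Pc_abs[OF assms]]])
  moreover have [measurable]: "ftc \<in> borel_measurable borel"
    by (rule borel_measurable_continuous_onI[OF ftc_cont])
  ultimately show ?thesis by simp
qed

lemma H_bounds:
  assumes "Pc \<phi>" shows "0 \<le> H \<phi> \<xi> \<and> H \<phi> \<xi> \<le> exp (- M * \<xi>) * (c * M)"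
proof -
  have m: "\<phi> \<in> borel_measurable borel" and b: "\<And>x. 0 \<le> \<phi> x \<and> \<phi> x \<le> 1"
    using assms unfolding Pc_def by auto
  have k: "0 \<le> KL \<phi> \<xi>" "KL \<phi> \<xi> \<le> 1" using KL_bounds[OF m b] by auto
  have fb: "0 \<le> ft (\<phi> \<xi>)" "ft (\<phi> \<xi>) \<le> c * M - d" using ft_bounds b by auto
  have "0 \<le> d * KL \<phi> \<xi> + ft (\<phi> \<xi>)" using k fb d by simp
  moreover have "d * KL \<phi> \<xi> \<le> d" using mult_left_mono[OF k(2), of d] d by simp
  then have "d * KL \<phi> \<xi> + ft (\<phi> \<xi>) \<le> c * M"
    using fb by simp
  ultimately show ?thesis unfolding H_def by (simp add: mult_left_mono)
qed

lemma H_int: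
  assumes "Pc \<phi>" shows "H \<phi> integrable_on {a..b}"
proof (rule measurable_bounded_by_integrable_imp_integrable)
  show "H \<phi> \<in> borel_measurable (lebesgue_on {a..b})"
    by (rule borel_lebesgue_on[OF H_meas[OF assms]])
  show "(\<lambda>\<xi>. exp (- M * \<xi>) * (c * M)) integrable_on {a..b}"
    by (intro integrable_continuous_interval continuous_intros)
  show "norm (H \<phi> x) \<le> exp (- M * x) * (c * M)" if "x \<in> {a..b}" for x
    using H_bounds[OF assms, of x] by simp
qed auto

lemma exp_int:
  assumes "x \<le> 0"
  shows "((\<lambda>\<xi>. exp (- M * \<xi>) * (c * M)) has_integral c * (exp (- M * x) - 1)) {x..0}"
proof -
  have "((\<lambda>\<xi>. exp (- M * \<xi>) * (c * M)) has_integral ((\<lambda>\<xi>. - c * exp (- M * \<xi>)) 0 - (\<lambda>\<xi>. - c * exp (- M * \<xi>)) x)) {x..0}"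
  proof (rule fundamental_theorem_of_calculus[OF assms])
    fix t :: real
    have "((\<lambda>\<xi>. - c * exp (- M * \<xi>)) has_real_derivative exp (- M * t) * (c * M)) (at t)"
      by (auto intro!: derivative_eq_intros)
    then show "((\<lambda>\<xi>. - c * exp (- M * \<xi>)) has_vector_derivative exp (- M * t) * (c * M)) (at t within {x..0})"
      by (simp add: has_real_derivative_iff_has_vector_derivative has_vector_derivative_at_within)
  qed
  then show ?thesis by (simp add: algebra_simps)
qed

lemma I_cont:
  assumes "Pc \<phi>" shows "continuous_on {..<0} (\<lambda>x. integral {x..0} (H \<phi>))"
proof (rule continuous_at_imp_continuous_on, intro ballI)
  fix x0 :: real assume "x0 \<in> {..<0}"
  then have "x0 \<in> interior {x0 - 1..0}" by simp
  moreover have "continuous_on {x0 - 1..0} (\<lambda>x. integral {x..0} (H \<phi>))"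
    by (rule indefinite_integral_continuous_1'[OF H_int[OF assms]])
  ultimately show "isCont (\<lambda>x. integral {x..0} (H \<phi>)) x0"
    using continuous_on_interior by blast
qed

lemma A_cont:
  assumes "Pc \<phi>" shows "continuous_on {..<0} (A \<phi>)"
proof -
  have "continuous_on {..<0} (\<lambda>x. exp (M * x) * \<sigma> + exp (M * x) / c * integral {x..0} (H \<phi>))"
    using c by (intro continuous_intros I_cont[OF assms]) auto
  then show ?thesis
    by (rule continuous_on_eq) (simp add: A_eq[OF assms])
qed

lemma I_bounds:
  assumes "Pc \<phi>" "x \<le> 0"
  shows "0 \<le> integral {x..0} (H \<phi>)" "integral {x..0} (H \<phi>) \<le> c * (exp (- M * x) - 1)"
proof -
  show "0 \<le> integral {x..0} (H \<phi>)"
    by (rule Henstock_Kurzweil_Integration.integral_nonneg[OF H_int[OF assms(1)]]) (use H_bounds[OF assms(1)] in auto)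
  show "integral {x..0} (H \<phi>) \<le> c * (exp (- M * x) - 1)"
    by (rule has_integral_le[OF integrable_integral[OF H_int[OF assms(1)]] exp_int[OF assms(2)]])
       (use H_bounds[OF assms(1)] in auto)
qed

lemma A_P:
  assumes P: "Pc \<phi>" shows "Pc (A \<phi>)"
  unfolding Pc_def
proof (intro conjI)
  define F where "F x = exp (M * x) * \<sigma> + exp (M * x) / c * integral {x..0} (H \<phi>)" for x
  have "A \<phi> = (\<lambda>x. if x \<in> {0..} then \<sigma> else F x)"
    by (auto simp: A_eq[OF P] F_def)
  moreover have "(\<lambda>x. if x \<in> {0..} then \<sigma> else F x) \<in> borel_measurable borel"
  proof (rule borel_measurable_continuous_on_if)
    have "- {0..} = {..<(0::real)}" by auto
    moreover have "continuous_on {..<0} F"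
      unfolding F_def using c by (intro continuous_intros I_cont[OF P]) auto
    ultimately show "continuous_on (- {0..}) F" by simp
  qed auto
  ultimately show "A \<phi> \<in> borel_measurable borel" by simp
next
  show "\<forall>x. 0 \<le> A \<phi> x \<and> A \<phi> x \<le> 1"
  proof
  fix x :: real
  show "0 \<le> A \<phi> x \<and> A \<phi> x \<le> 1"
  proof (cases "0 \<le> x")
    case True then show ?thesis using \<sigma> by (simp add: A_eq[OF P])
  next
    case False
    then have x: "x \<le> 0" by simp
    have b: "0 \<le> integral {x..0} (H \<phi>)" "integral {x..0} (H \<phi>) \<le> c * (exp (- M * x) - 1)"
      using I_bounds[OF P x] by auto
    have e: "exp (M * x) * exp (- M * x) = 1" by (simp add: mult_exp_exp)
    have "exp (M * x) / c * integral {x..0} (H \<phi>) \<le> exp (M * x) / c * (c * (exp (- M * x) - 1))"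
      by (rule mult_left_mono[OF b(2)]) (use c in simp)
    also have "\<dots> = 1 - exp (M * x)" using c e by (simp add: field_simps)
    finally have u: "exp (M * x) / c * integral {x..0} (H \<phi>) \<le> 1 - exp (M * x)" .
    have "exp (M * x) * \<sigma> \<le> exp (M * x)" using \<sigma> by simp
    moreover have "0 \<le> exp (M * x) / c * integral {x..0} (H \<phi>)" using b c by simp
    moreover have "A \<phi> x = exp (M * x) * \<sigma> + exp (M * x) / c * integral {x..0} (H \<phi>)"
      using False by (simp add: A_eq[OF P])
    ultimately show ?thesis using u \<sigma> by (smt (verit) exp_gt_zero mult_nonneg_nonneg)
  qed
  qed
next
  show "\<forall>x\<ge>0. A \<phi> x = \<sigma>" by (simp add: A_eq[OF P])
qed

lemma A_mono:
  assumes P: "Pc \<phi>" "Pc \<psi>" and le: "\<And>y. \<phi> y \<le> \<psi> y"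
  shows "A \<phi> x \<le> A \<psi> x"
proof (cases "0 \<le> x")
  case True then show ?thesis by (simp add: A_eq[OF P(1)] A_eq[OF P(2)])
next
  case False
  have Hle: "H \<phi> \<xi> \<le> H \<psi> \<xi>" for \<xi>
  proof -
    have m: "\<phi> \<in> borel_measurable borel" "\<psi> \<in> borel_measurable borel"
      and b: "\<And>y. 0 \<le> \<phi> y \<and> \<phi> y \<le> 1" "\<And>y. 0 \<le> \<psi> y \<and> \<psi> y \<le> 1"
      using P unfolding Pc_def by auto
    have "KL \<phi> \<xi> \<le> KL \<psi> \<xi>" by (rule KL_mono[OF m Pc_abs[OF P(1)] Pc_abs[OF P(2)] le])
    moreover have "ft (\<phi> \<xi>) \<le> ft (\<psi> \<xi>)" using ftmono b le by (auto intro: mono_onD)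
    ultimately have "d * KL \<phi> \<xi> + ft (\<phi> \<xi>) \<le> d * KL \<psi> \<xi> + ft (\<psi> \<xi>)"
      using d by (simp add: add_mono)
    then show ?thesis unfolding H_def by (simp add: mult_left_mono)
  qed
  have "integral {x..0} (H \<phi>) \<le> integral {x..0} (H \<psi>)"
    by (rule integral_le[OF H_int[OF P(1)] H_int[OF P(2)] Hle])
  then have "exp (M * x) / c * integral {x..0} (H \<phi>) \<le> exp (M * x) / c * integral {x..0} (H \<psi>)"
    by (rule mult_left_mono) (use c in auto)
  then show ?thesis using False by (simp add: A_eq[OF P(1)] A_eq[OF P(2)])
qed

lemma ft_ftc: "Pc \<phi> \<Longrightarrow> ft (\<phi> y) = ftc (\<phi> y)"
  unfolding Pc_def by (simp add: ftc_eq)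

lemma A_lim:
  assumes P: "\<And>n. Pc (\<phi>s n)" "Pc \<phi>" and lim: "\<And>y. (\<lambda>n. \<phi>s n y) \<longlonglongrightarrow> \<phi> y"
  shows "(\<lambda>n. A (\<phi>s n) x) \<longlonglongrightarrow> A \<phi> x"
proof (cases "0 \<le> x")
  case True then show ?thesis by (simp add: A_eq[OF P(1)] A_eq[OF P(2)])
next
  case False
  have Hlim: "(\<lambda>n. H (\<phi>s n) \<xi>) \<longlonglongrightarrow> H \<phi> \<xi>" for \<xi>
  proof -
    have m: "\<And>n. \<phi>s n \<in> borel_measurable borel" "\<phi> \<in> borel_measurable borel"
      using P unfolding Pc_def by auto
    have k: "(\<lambda>n. KL (\<phi>s n) \<xi>) \<longlonglongrightarrow> KL \<phi> \<xi>"
      by (rule KL_lim[OF m _ lim]) (rule Pc_abs[OF P(1)])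
    have "isCont ftc (\<phi> \<xi>)" using ftc_cont by (simp add: continuous_on_eq_continuous_at)
    then have "(\<lambda>n. ftc (\<phi>s n \<xi>)) \<longlonglongrightarrow> ftc (\<phi> \<xi>)"
      by (rule isCont_tendsto_compose) (rule lim)
    then have "(\<lambda>n. ft (\<phi>s n \<xi>)) \<longlonglongrightarrow> ft (\<phi> \<xi>)"
      by (simp add: ft_ftc[OF P(1)] ft_ftc[OF P(2)])
    then show ?thesis unfolding H_def by (intro tendsto_intros k)
  qed
  have "(\<lambda>n. integral {x..0} (H (\<phi>s n))) \<longlonglongrightarrow> integral {x..0} (H \<phi>)"
  proof (rule dominated_convergence(2))
    show "H (\<phi>s n) integrable_on {x..0}" for n by (rule H_int[OF P(1)])
    show "(\<lambda>\<xi>. exp (- M * \<xi>) * (c * M)) integrable_on {x..0}"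
      by (intro integrable_continuous_interval continuous_intros)
    show "norm (H (\<phi>s n) \<xi>) \<le> exp (- M * \<xi>) * (c * M)" if "\<xi> \<in> {x..0}" for n \<xi>
      using H_bounds[OF P(1), of n \<xi>] by simp
    show "(\<lambda>n. H (\<phi>s n) \<xi>) \<longlonglongrightarrow> H \<phi> \<xi>" if "\<xi> \<in> {x..0}" for \<xi> by (rule Hlim)
  qed
  then have "(\<lambda>n. exp (M * x) * \<sigma> + exp (M * x) / c * integral {x..0} (H (\<phi>s n)))
      \<longlonglongrightarrow> exp (M * x) * \<sigma> + exp (M * x) / c * integral {x..0} (H \<phi>)"
    by (intro tendsto_add tendsto_const tendsto_mult)
  then show ?thesis using False by (simp add: A_eq[OF P(1)] A_eq[OF P(2)])
qed

lemma Pc_lim: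
  assumes P: "\<And>n. Pc (\<phi>s n)" and lim: "\<And>y. (\<lambda>n. \<phi>s n y) \<longlonglongrightarrow> \<phi> y"
  shows "Pc \<phi>"
  unfolding Pc_def
proof (intro conjI allI impI)
  show "\<phi> \<in> borel_measurable borel"
    by (rule borel_measurable_LIMSEQ_real[OF lim]) (use P in \<open>auto simp: Pc_def\<close>)
  fix x :: real
  show "0 \<le> \<phi> x" by (rule LIMSEQ_le_const[OF lim]) (use P in \<open>auto simp: Pc_def\<close>)
  show "\<phi> x \<le> 1" by (rule LIMSEQ_le_const2[OF lim]) (use P in \<open>auto simp: Pc_def\<close>)
next
  fix x :: real assume x: "0 \<le> x"
  have "(\<lambda>n. \<phi>s n x) = (\<lambda>n. \<sigma>)" using P x by (auto simp: Pc_def)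
  then show "\<phi> x = \<sigma>" using lim[of x] by (metis LIMSEQ_unique tendsto_const)
qed

lemma fix_cont:
  assumes P: "Pc \<phi>" and fx: "A \<phi> = \<phi>"
  shows "continuous_on {..<0} \<phi>" "continuous_on {..<0} (H \<phi>)"
    "continuous_on {..<0} (\<lambda>x. M * \<phi> x - (d * KL \<phi> x + ft (\<phi> x)) / c)"
proof -
  show pc: "continuous_on {..<0} \<phi>" using A_cont[OF P] fx by simp
  have m: "\<phi> \<in> borel_measurable borel" using P unfolding Pc_def by auto
  have kc: "continuous_on {..<0} (KL \<phi>)"
    using KL_cont[OF m Pc_abs[OF P]] by (rule continuous_on_subset) simp
  have fc': "continuous_on {..<0} (\<lambda>x. ftc (\<phi> x))"
    using continuous_on_compose2[OF ftc_cont pc] by simp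
  have "H \<phi> = (\<lambda>\<xi>. exp (- M * \<xi>) * (d * KL \<phi> \<xi> + ftc (\<phi> \<xi>)))"
    unfolding H_def by (simp add: ft_ftc[OF P])
  then show "continuous_on {..<0} (H \<phi>)"
    using kc fc' by (simp) (intro continuous_intros)
  have "continuous_on {..<0} (\<lambda>x. M * \<phi> x - (d * KL \<phi> x + ftc (\<phi> x)) / c)"
    using kc fc' pc c by (intro continuous_intros) auto
  then show "continuous_on {..<0} (\<lambda>x. M * \<phi> x - (d * KL \<phi> x + ft (\<phi> x)) / c)"
    by (simp add: ft_ftc[OF P])
qed

lemma fix_deriv:
  assumes P: "Pc \<phi>" and fx: "A \<phi> = \<phi>" and x: "x < 0"
  shows "(\<phi> has_real_derivative (M * \<phi> x - (d * KL \<phi> x + ft (\<phi> x)) / c)) (at x)"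
proof -
  define a where "a = x - 1"
  define b where "b = x / 2"
  have ab: "a < x" "x < b" "b < 0" using x unfolding a_def b_def by auto
  have hc: "continuous_on {a..b} (H \<phi>)"
    using fix_cont(2)[OF P fx] by (rule continuous_on_subset) (use ab in auto)
  have D1: "((\<lambda>t. integral {t..b} (H \<phi>)) has_real_derivative - H \<phi> x) (at x)"
  proof -
    have d1: "((\<lambda>t. integral {t..b} (H \<phi>)) has_real_derivative - H \<phi> x) (at x within {a..b})"
      by (rule integral_has_real_derivative'[OF hc]) (use ab in auto)
    have "x \<in> interior {a..b}" using ab by simp
    then have "at x within {a..b} = at x" by (rule at_within_interior)
    then show ?thesis using d1 by (simp only:)
  qed
  define C where "C = integral {b..0} (H \<phi>)"
  define E where "E t = exp (M * t) * (\<sigma> + (integral {t..b} (H \<phi>) + C) / c)" for t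
  have DE: "(E has_real_derivative (M * exp (M * x)) * (\<sigma> + (integral {x..b} (H \<phi>) + C) / c) + (- H \<phi> x / c) * exp (M * x)) (at x)"
    unfolding E_def
  proof (rule DERIV_mult)
    show "((\<lambda>t. exp (M * t)) has_real_derivative M * exp (M * x)) (at x)"
      by (auto intro!: derivative_eq_intros)
    show "((\<lambda>t. \<sigma> + (integral {t..b} (H \<phi>) + C) / c) has_real_derivative - H \<phi> x / c) (at x)"
    proof -
      have "((\<lambda>t. (integral {t..b} (H \<phi>) + C) / c) has_real_derivative (- H \<phi> x + 0) / c) (at x)"
        by (intro DERIV_cdivide DERIV_add D1 DERIV_const)
      then have "((\<lambda>t. \<sigma> + (integral {t..b} (H \<phi>) + C) / c) has_real_derivative 0 + (- H \<phi> x + 0) / c) (at x)"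
        by (intro DERIV_add DERIV_const)
      then show ?thesis by simp
    qed
  qed
  have eqE: "\<phi> t = E t" if "t \<in> {a<..<b}" for t
  proof -
    have t: "t < 0" "t \<le> b" using that ab by auto
    have "integral {t..b} (H \<phi>) + integral {b..0} (H \<phi>) = integral {t..0} (H \<phi>)"
      by (rule Henstock_Kurzweil_Integration.integral_combine[OF t(2)]) (use ab H_int[OF P] in auto)
    then have "\<phi> t = exp (M * t) * \<sigma> + exp (M * t) / c * (integral {t..b} (H \<phi>) + C)"
      using fx A_eq[OF P, of t] t unfolding C_def by (metis linorder_not_le)
    then show ?thesis unfolding E_def by (simp add: algebra_simps add_divide_distrib)
  qed
  have "(\<phi> has_real_derivative (M * exp (M * x)) * (\<sigma> + (integral {x..b} (H \<phi>) + C) / c) + (- H \<phi> x / c) * exp (M * x)) (at x)"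
    by (rule has_field_derivative_transform_within_open[OF DE, of "{a<..<b}"]) (use ab eqE in auto)
  moreover have "(M * exp (M * x)) * (\<sigma> + (integral {x..b} (H \<phi>) + C) / c) + (- H \<phi> x / c) * exp (M * x)
      = M * \<phi> x - (d * KL \<phi> x + ft (\<phi> x)) / c"
  proof -
    have px: "\<phi> x = exp (M * x) * (\<sigma> + (integral {x..b} (H \<phi>) + C) / c)" using eqE ab unfolding E_def by auto
    have e: "exp (M * x) * exp (- M * x) = 1" by (simp add: mult_exp_exp)
    have "(- H \<phi> x / c) * exp (M * x) = - ((exp (M * x) * exp (- M * x)) * (d * KL \<phi> x + ft (\<phi> x))) / c"
      unfolding H_def by (simp add: field_simps)
    also have "\<dots> = - (d * KL \<phi> x + ft (\<phi> x)) / c" by (simp only: e mult_1)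
    finally have h: "(- H \<phi> x / c) * exp (M * x) = - (d * KL \<phi> x + ft (\<phi> x)) / c" .
    have m: "(M * exp (M * x)) * (\<sigma> + (integral {x..b} (H \<phi>) + C) / c) = M * \<phi> x"
      by (simp only: px mult.assoc)
    show ?thesis unfolding h m by (simp add: diff_divide_distrib add_divide_distrib)
  qed
  ultimately show ?thesis by simp
qed

lemma subsol:
  fixes ps ps' :: "real \<Rightarrow> real" and cs :: real
  assumes pc: "continuous_on UNIV ps" and pb: "\<And>x. 0 \<le> ps x \<and> ps x \<le> 1"
    and am: "antimono ps" and p0: "ps 0 = \<sigma>"
    and pd: "\<And>x. (ps has_real_derivative ps' x) (at x)" and pneg: "\<And>x. ps' x \<le> 0"
    and peq: "\<And>x. d * KL ps x - d * ps x + cs * ps' x + f (ps x) = 0" and cs: "c \<le> cs"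
  shows "Pc (\<lambda>y. max (ps y) \<sigma>)" "\<And>x. max (ps x) \<sigma> \<le> A (\<lambda>y. max (ps y) \<sigma>) x"
proof -
  define \<psi> where "\<psi> = (\<lambda>y. max (ps y) \<sigma>)"
  have pm[measurable]: "ps \<in> borel_measurable borel" by (rule borel_measurable_continuous_onI[OF pc])
  have le0: "ps x \<le> \<sigma>" if "0 \<le> x" for x using am that p0 by (auto simp: antimono_def)
  have ge0: "\<sigma> \<le> ps x" if "x \<le> 0" for x using am that p0 by (auto simp: antimono_def)
  have P: "Pc \<psi>"
    unfolding Pc_def \<psi>_def using pb \<sigma> le0 by (auto simp: max_def)
  then show "Pc (\<lambda>y. max (ps y) \<sigma>)" by (simp add: \<psi>_def)
  fix x :: real
  show "max (ps x) \<sigma> \<le> A (\<lambda>y. max (ps y) \<sigma>) x"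
  proof (cases "0 \<le> x")
    case True then show ?thesis using le0[OF True] by (simp add: A_eq[OF P[unfolded \<psi>_def]])
  next
    case False
    then have x: "x \<le> 0" by simp
    have Hge: "c * (exp (- M * \<xi>) * (M * ps \<xi> - ps' \<xi>)) \<le> H \<psi> \<xi>" if "\<xi> \<in> {x..0}" for \<xi>
    proof -
      have \<xi>: "\<xi> \<le> 0" using that by simp
      have pe: "\<psi> \<xi> = ps \<xi>" using ge0[OF \<xi>] unfolding \<psi>_def by simp
      have pbd: "\<And>y. \<bar>ps y\<bar> \<le> 1" using pb by (simp add: abs_le_iff)
      have "KL ps \<xi> \<le> KL \<psi> \<xi>"
        by (rule KL_mono[OF pm _ pbd Pc_abs[OF P]]) (use P in \<open>auto simp: Pc_def \<psi>_def\<close>)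
      then have "d * KL ps \<xi> \<le> d * KL \<psi> \<xi>" using d by simp
      moreover have "(cs - c) * ps' \<xi> \<le> 0" using cs pneg[of \<xi>] by (simp add: mult_nonneg_nonpos)
      moreover note peq[of \<xi>]
      ultimately have "c * (M * ps \<xi> - ps' \<xi>) \<le> d * KL \<psi> \<xi> + ft (\<psi> \<xi>)"
        unfolding pe ftilde_def by (simp add: algebra_simps)
      then show ?thesis unfolding H_def
        by (simp add: mult.left_commute[of c] mult_left_mono)
    qed
    have FTC: "((\<lambda>\<xi>. c * (exp (- M * \<xi>) * (M * ps \<xi> - ps' \<xi>))) has_integral
        ((\<lambda>\<xi>. - c * (exp (- M * \<xi>) * ps \<xi>)) 0 - (\<lambda>\<xi>. - c * (exp (- M * \<xi>) * ps \<xi>)) x)) {x..0}"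
    proof (rule fundamental_theorem_of_calculus[OF x])
      fix t :: real
      have de: "((\<lambda>\<xi>. exp (- M * \<xi>)) has_real_derivative - M * exp (- M * t)) (at t)"
        by (auto intro!: derivative_eq_intros)
      have "((\<lambda>\<xi>. - c * (exp (- M * \<xi>) * ps \<xi>)) has_real_derivative - c * (- M * exp (- M * t) * ps t + ps' t * exp (- M * t))) (at t)"
        by (intro DERIV_cmult DERIV_mult de pd)
      moreover have "- c * (- M * exp (- M * t) * ps t + ps' t * exp (- M * t)) = c * (exp (- M * t) * (M * ps t - ps' t))"
        by (simp add: algebra_simps)
      ultimately have "((\<lambda>\<xi>. - c * (exp (- M * \<xi>) * ps \<xi>)) has_real_derivative c * (exp (- M * t) * (M * ps t - ps' t))) (at t)"
        by simp
      then show "((\<lambda>\<xi>. - c * (exp (- M * \<xi>) * ps \<xi>)) has_vector_derivative c * (exp (- M * t) * (M * ps t - ps' t))) (at t within {x..0})"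
        by (simp add: has_real_derivative_iff_has_vector_derivative has_vector_derivative_at_within)
    qed
    have "c * (exp (- M * x) * ps x) - c * \<sigma> \<le> integral {x..0} (H \<psi>)"
      using has_integral_le[OF FTC integrable_integral[OF H_int[OF P]] Hge] p0 by simp
    then have "exp (M * x) / c * (c * (exp (- M * x) * ps x) - c * \<sigma>) \<le> exp (M * x) / c * integral {x..0} (H \<psi>)"
      by (rule mult_left_mono) (use c in simp)
    moreover have "exp (M * x) / c * (c * (exp (- M * x) * ps x) - c * \<sigma>) = ps x - exp (M * x) * \<sigma>"
    proof -
      have e: "exp (M * x) * exp (- M * x) = 1" by (simp add: mult_exp_exp)
      have "exp (M * x) / c * (c * (exp (- M * x) * ps x) - c * \<sigma>) = (exp (M * x) * exp (- M * x)) * ps x - exp (M * x) * \<sigma>"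
        using c by (simp add: field_simps)
      then show ?thesis by (simp only: e mult_1)
    qed
    ultimately have "ps x \<le> exp (M * x) * \<sigma> + exp (M * x) / c * integral {x..0} (H \<psi>)" by simp
    moreover have "max (ps x) \<sigma> = ps x" using ge0[OF x] by simp
    ultimately show ?thesis using False by (simp add: A_eq[OF P[unfolded \<psi>_def]] \<psi>_def)
  qed
qed

lemma main_iter:
  assumes P0: "Pc \<psi>0" and sub: "\<And>x. \<psi>0 x \<le> A \<psi>0 x"
  shows "\<exists>\<phi>\<sigma>. (\<forall>x. (\<lambda>n. (A ^^ n) \<psi>0 x) \<longlonglongrightarrow> \<phi>\<sigma> x) \<and> Pc \<phi>\<sigma> \<and> A \<phi>\<sigma> = \<phi>\<sigma> \<and> (\<forall>x. \<psi>0 x \<le> \<phi>\<sigma> x)"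
proof -
  define \<psi> where "\<psi> n = (A ^^ n) \<psi>0" for n
  have Ps: "Pc (\<psi> n)" for n
    by (induction n) (auto simp: \<psi>_def P0 A_P)
  have suc: "\<psi> (Suc n) = A (\<psi> n)" for n by (simp add: \<psi>_def)
  have inc: "\<psi> n x \<le> \<psi> (Suc n) x" for n x
  proof (induction n arbitrary: x)
    case 0 then show ?case using sub by (simp add: \<psi>_def)
  next
    case (Suc n) then show ?case
      unfolding suc[of "Suc n"] suc[of n] by (intro A_mono Ps A_P)
  qed
  have incs: "incseq (\<lambda>n. \<psi> n x)" for x by (rule incseq_SucI) (rule inc)
  have bdd: "bdd_above (range (\<lambda>n. \<psi> n x))" for x
    using Ps by (auto simp: Pc_def intro!: bdd_aboveI[where M=1])
  define \<phi>\<sigma> where "\<phi>\<sigma> x = (SUP n. \<psi> n x)" for x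
  have lim: "(\<lambda>n. \<psi> n x) \<longlonglongrightarrow> \<phi>\<sigma> x" for x
    unfolding \<phi>\<sigma>_def by (rule LIMSEQ_incseq_SUP[OF bdd incs])
  have P: "Pc \<phi>\<sigma>" by (rule Pc_lim[OF Ps lim])
  have "A \<phi>\<sigma> x = \<phi>\<sigma> x" for x
  proof -
    have "(\<lambda>n. A (\<psi> n) x) \<longlonglongrightarrow> A \<phi>\<sigma> x" by (rule A_lim[OF Ps P lim])
    moreover have "(\<lambda>n. A (\<psi> n) x) \<longlonglongrightarrow> \<phi>\<sigma> x"
      using LIMSEQ_Suc[OF lim[of x]] by (simp add: suc)
    ultimately show ?thesis by (rule LIMSEQ_unique)
  qed
  moreover have "\<psi>0 x \<le> \<phi>\<sigma> x" for x
    using incseq_le[OF incs lim, of 0] by (simp add: \<psi>_def)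
  ultimately show ?thesis using lim P unfolding \<psi>_def by blast
qed


end

theorem lemma2p1:
  fixes d c cstar \<sigma> M :: real and J f \<phi>star :: "real \<Rightarrow> real"
  assumes d: "d > 0"
    and J: "cond_J J" and J2: "cond_J2 J" and f3: "cond_f3 f"
    and cstar_pos: "cstar > 0"
    and cstar_min: "\<forall>c'. (\<exists>\<phi>. tw_solution d J f c' \<phi>) \<longleftrightarrow> c' \<ge> cstar"
    and sigma: "0 < \<sigma>" "\<sigma> < 1"
    and c: "0 < c" "c < cstar"
    and M: "M > 0" "mono_on {0..1} (ftilde c M d f)"
    and phistar: "tw_solution d J f cstar \<phi>star" "\<phi>star 0 = \<sigma>"
  shows "\<exists>\<phi>\<sigma>. (\<forall>x. (\<lambda>n. (opA d J f c M \<sigma> ^^ n) (\<lambda>y. max (\<phi>star y) \<sigma>) x) \<longlonglongrightarrow> \<phi>\<sigma> x)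
     \<and> (\<exists>\<phi>'. continuous_on {..<0} \<phi>'
          \<and> (\<forall>x<0. (\<phi>\<sigma> has_real_derivative \<phi>' x) (at x)
               \<and> d * integral UNIV (\<lambda>y. J (x - y) * \<phi>\<sigma> y) - d * \<phi>\<sigma> x + c * \<phi>' x
                   + f (\<phi>\<sigma> x) = 0))
     \<and> (\<phi>\<sigma> \<longlongrightarrow> 1) at_bot
     \<and> (\<forall>x\<ge>0. \<phi>\<sigma> x = \<sigma>)
     \<and> (\<forall>x. 0 \<le> \<phi>\<sigma> x \<and> \<phi>\<sigma> x \<le> 1)"
proof -
  have Jc: "continuous_on UNIV J" and Jnn: "\<And>x. J x \<ge> 0" and J1: "(J has_integral 1) UNIV"
    using J unfolding cond_J_def by auto
  obtain f' where fd: "\<And>u. u \<ge> 0 \<Longrightarrow> (f has_real_derivative f' u) (at u within {0..})"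
    and f0: "f 0 = 0" and f1: "f 1 = 0"
    using f3 unfolding cond_f3_def by auto
  have "continuous_on {0..} f"
    unfolding continuous_on_eq_continuous_within using fd by (auto intro: DERIV_continuous)
  then have fc: "continuous_on {0..1} f" by (rule continuous_on_subset) auto
  interpret w: wave J f d c M \<sigma>
    by unfold_locales (use Jc Jnn J1 d c sigma M fc f0 f1 in auto)
  have am: "antimono \<phi>star" and tw: "\<And>x. \<phi>star differentiable (at x) \<and>
      d * integral UNIV (\<lambda>y. J (x - y) * \<phi>star y) - d * \<phi>star x + cstar * deriv \<phi>star x + f (\<phi>star x) = 0"
    and lb: "(\<phi>star \<longlongrightarrow> 1) at_bot" and lt: "(\<phi>star \<longlongrightarrow> 0) at_top"
    using phistar(1) unfolding tw_solution_def by auto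
  have pd: "(\<phi>star has_real_derivative deriv \<phi>star x) (at x)" for x
    using tw[of x] DERIV_deriv_iff_real_differentiable by blast
  have pc: "continuous_on UNIV \<phi>star"
    by (rule continuous_at_imp_continuous_on) (use pd DERIV_isCont in blast)
  have pb: "0 \<le> \<phi>star x \<and> \<phi>star x \<le> 1" for x
  proof
    have "eventually (\<lambda>y. \<phi>star x \<le> \<phi>star y) at_bot"
      unfolding eventually_at_bot_linorder using am by (auto simp: antimono_def)
    then show "\<phi>star x \<le> 1" by (rule tendsto_lowerbound[OF lb]) simp
    have "eventually (\<lambda>y. \<phi>star y \<le> \<phi>star x) at_top"
      unfolding eventually_at_top_linorder using am by (auto simp: antimono_def)
    then show "0 \<le> \<phi>star x" by (rule tendsto_upperbound[OF lt]) simp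
  qed
  have pneg: "deriv \<phi>star x \<le> 0" for x
  proof (rule ccontr)
    assume "\<not> deriv \<phi>star x \<le> 0"
    then obtain \<delta> where \<delta>: "\<delta> > 0" "\<forall>h>0. h < \<delta> \<longrightarrow> \<phi>star x < \<phi>star (x + h)"
      using DERIV_pos_inc_right[OF pd[of x]] by force
    then have "\<phi>star x < \<phi>star (x + \<delta> / 2)" by auto
    moreover have "\<phi>star (x + \<delta> / 2) \<le> \<phi>star x" using am \<delta>(1) by (auto simp: antimono_def)
    ultimately show False by simp
  qed
  have pm: "\<phi>star \<in> borel_measurable borel" by (rule borel_measurable_continuous_onI[OF pc])
  have pbd: "\<bar>\<phi>star y\<bar> \<le> 1" for y using pb[of y] by (simp add: abs_le_iff)
  have peq: "d * w.KL \<phi>star x - d * \<phi>star x + cstar * deriv \<phi>star x + f (\<phi>star x) = 0" for x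
    using tw[of x] w.KL_HK[OF pm pbd, of x] by simp
  have sub: "w.Pc (\<lambda>y. max (\<phi>star y) \<sigma>)" "\<And>x. max (\<phi>star x) \<sigma> \<le> opA d J f c M \<sigma> (\<lambda>y. max (\<phi>star y) \<sigma>) x"
    using w.subsol[OF pc pb am phistar(2) pd pneg peq] c by auto
  obtain \<phi>\<sigma> where lim: "\<forall>x. (\<lambda>n. (opA d J f c M \<sigma> ^^ n) (\<lambda>y. max (\<phi>star y) \<sigma>) x) \<longlonglongrightarrow> \<phi>\<sigma> x"
    and P: "w.Pc \<phi>\<sigma>" and fx: "opA d J f c M \<sigma> \<phi>\<sigma> = \<phi>\<sigma>" and ge: "\<forall>x. max (\<phi>star x) \<sigma> \<le> \<phi>\<sigma> x"
    using w.main_iter[OF sub(1) sub(2)] by blast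
  have Pm: "\<phi>\<sigma> \<in> borel_measurable borel" and Pb: "\<forall>x. 0 \<le> \<phi>\<sigma> x \<and> \<phi>\<sigma> x \<le> 1"
    and Ps: "\<forall>x\<ge>0. \<phi>\<sigma> x = \<sigma>"
    using P unfolding w.Pc_def by auto
  define \<phi>' where "\<phi>' x = M * \<phi>\<sigma> x - (d * w.KL \<phi>\<sigma> x + ftilde c M d f (\<phi>\<sigma> x)) / c" for x
  have D: "continuous_on {..<0} \<phi>' \<and> (\<forall>x<0. (\<phi>\<sigma> has_real_derivative \<phi>' x) (at x)
      \<and> d * integral UNIV (\<lambda>y. J (x - y) * \<phi>\<sigma> y) - d * \<phi>\<sigma> x + c * \<phi>' x + f (\<phi>\<sigma> x) = 0)"
  proof (intro conjI allI impI)
    show "continuous_on {..<0} \<phi>'" unfolding \<phi>'_def by (rule w.fix_cont(3)[OF P fx])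
    fix x :: real assume x: "x < 0"
    show "(\<phi>\<sigma> has_real_derivative \<phi>' x) (at x)" unfolding \<phi>'_def by (rule w.fix_deriv[OF P fx x])
    have "integral UNIV (\<lambda>y. J (x - y) * \<phi>\<sigma> y) = w.KL \<phi>\<sigma> x"
      by (rule w.KL_HK[OF Pm w.Pc_abs[OF P]])
    then show "d * integral UNIV (\<lambda>y. J (x - y) * \<phi>\<sigma> y) - d * \<phi>\<sigma> x + c * \<phi>' x + f (\<phi>\<sigma> x) = 0"
      unfolding \<phi>'_def ftilde_def using c by (simp add: field_simps)
  qed
  have L: "(\<phi>\<sigma> \<longlongrightarrow> 1) at_bot"
  proof (rule tendsto_sandwich[OF _ _ lb tendsto_const])
    show "eventually (\<lambda>y. \<phi>star y \<le> \<phi>\<sigma> y) at_bot"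
      using ge by (auto intro: always_eventually order_trans[OF max.cobounded1])
    show "eventually (\<lambda>y. \<phi>\<sigma> y \<le> 1) at_bot" using Pb by auto
  qed
  show ?thesis using lim D L Ps Pb by blast
qed

end
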